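(* The map $\phi_s : \mathbf{ASM} \to \mathbb{K}(q)$ linearly defined, for any $s \in \{\operatorname{io}, \operatorname{oi}\}$ and any ASM $\delta$ of size $n$ by $\phi_s(\mathbf{F}_{M^\delta}) := \frac{q^{s(\delta)}}{n!}$ is an algebra morphism.
   Context: Let $\mathbb{K}$ be a field of characteristic zero. An alternating sign matrix (ASM) of size $n$ is an $n\times n$ matrix with entries in $\{0,+,-\}$ such that every row and column starts and ends (ignoring zeros) with $+$ and in each row and column the $+$ and $-$ alternate. For an ASM $\delta$, $M^\delta$ is the $\{0,1\}$-matrix with $M^\delta_{ij}=1$ iff $\delta_{ij}\ne 0$. $\mathbf{PM}_1$ is the Hopf algebra with basis $(\mathbf{F}_M)$ indexed by $\{0,1\}$-square matrices with no null row or column, with product $\mathbf{F}_{M_1}\cdot\mathbf{F}_{M_2} = \sum \mathbf{F}_M$ over all $M$ obtained by shuffling the columns of $M_1$ (with an $n_2\times n_1$ zero block placed below) with the columns of $M_2$ (with an $n_1 \times n_2$ zero block placed above), $n_i$ the sizes. $\mathbf{ASM}$ is the Hopf subalgebra of $\mathbf{PM}_1$ spanned by the $\mathbf{F}_{M^\delta}$, graded by the size of $\delta$. Via the bijection between ASMs and six-vertex configurations with domain wall boundary conditions, a $+$ entry corresponds to a vertex of type $\operatorname{oi}$ and a $-$ entry to a vertex of type $\operatorname{io}$; thus $\operatorname{oi}(\delta)$ is the number of $+$ entries of $\delta$ and $\operatorname{io}(\delta)$ is the number of $-$ entries of $\delta$. *)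

theory Defs
  imports Main "HOL-Computational_Algebra.Polynomial" "HOL-Computational_Algebra.Fraction_Field"
begin

text \<open>Square matrices are pairs (size n, entry function); entries outside [0,n)x[0,n) are 0/False.\<close>

type_synonym pmat = "nat \<times> (nat \<Rightarrow> nat \<Rightarrow> bool)"
type_synonym sgnmat = "nat \<times> (nat \<Rightarrow> nat \<Rightarrow> int)"   \<comment> \<open>{0,+,-}-matrices, + = 1, - = -1\<close>

definition alternating_pm :: "int list \<Rightarrow> bool" where
  "alternating_pm xs \<longleftrightarrow> odd (length xs) \<and> (\<forall>k<length xs. xs ! k = (-1) ^ k)"

definition row_nonzeros :: "sgnmat \<Rightarrow> nat \<Rightarrow> int list" where
  "row_nonzeros \<delta> i = filter (\<lambda>x. x \<noteq> 0) (map (\<lambda>j. snd \<delta> i j) [0..<fst \<delta>])"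

definition col_nonzeros :: "sgnmat \<Rightarrow> nat \<Rightarrow> int list" where
  "col_nonzeros \<delta> j = filter (\<lambda>x. x \<noteq> 0) (map (\<lambda>i. snd \<delta> i j) [0..<fst \<delta>])"

definition is_asm :: "sgnmat \<Rightarrow> bool" where
  "is_asm \<delta> \<longleftrightarrow>
     (\<forall>i j. snd \<delta> i j \<in> {-1, 0, 1}) \<and>
     (\<forall>i j. (fst \<delta> \<le> i \<or> fst \<delta> \<le> j) \<longrightarrow> snd \<delta> i j = 0) \<and>
     (\<forall>i<fst \<delta>. alternating_pm (row_nonzeros \<delta> i)) \<and>
     (\<forall>j<fst \<delta>. alternating_pm (col_nonzeros \<delta> j))"

definition Mof :: "sgnmat \<Rightarrow> pmat" where
  "Mof \<delta> = (fst \<delta>, \<lambda>i j. snd \<delta> i j \<noteq> 0)"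

definition oi :: "sgnmat \<Rightarrow> nat" where
  "oi \<delta> = card {(i, j). i < fst \<delta> \<and> j < fst \<delta> \<and> snd \<delta> i j = 1}"

definition io :: "sgnmat \<Rightarrow> nat" where
  "io \<delta> = card {(i, j). i < fst \<delta> \<and> j < fst \<delta> \<and> snd \<delta> i j = -1}"

text \<open>Column shuffle of M1 (size n1, with zero block below) and M2 (size n2, with zero
  block above): S is the set of column positions receiving the columns of M1 (in order).\<close>
definition shuffle_cols :: "pmat \<Rightarrow> pmat \<Rightarrow> nat set \<Rightarrow> pmat" where
  "shuffle_cols A B S =
     (let n1 = fst A; n2 = fst B; N = n1 + n2 in
      (N, \<lambda>i c. i < N \<and> c < N \<and>
         (if c \<in> S then i < n1 \<and> snd A i (card {x\<in>S. x < c})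
          else n1 \<le> i \<and> snd B (i - n1) (card {x\<in>{..<N} - S. x < c}))))"

text \<open>Product of basis elements F_A . F_B of PM_1, as a multiset of basis matrices.\<close>
definition pm_prod :: "pmat \<Rightarrow> pmat \<Rightarrow> pmat multiset" where
  "pm_prod A B = image_mset (shuffle_cols A B)
      (mset_set {S. S \<subseteq> {..<fst A + fst B} \<and> card S = fst A})"

text \<open>Elements of PM_1 over K: finitely supported coefficient functions on matrices.\<close>
definition supp :: "(pmat \<Rightarrow> 'a::zero) \<Rightarrow> pmat set" where
  "supp x = {M. x M \<noteq> 0}"

definition pm_mult :: "(pmat \<Rightarrow> 'a::comm_ring_1) \<Rightarrow> (pmat \<Rightarrow> 'a) \<Rightarrow> (pmat \<Rightarrow> 'a)" where
  "pm_mult x y = (\<lambda>M. \<Sum>A\<in>supp x. \<Sum>B\<in>supp y. x A * y B * of_nat (count (pm_prod A B) M))"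

definition pm_one :: "pmat \<Rightarrow> 'a::comm_ring_1" where
  "pm_one = (\<lambda>M. if M = (0, \<lambda>i j. False) then 1 else 0)"

definition in_ASM :: "(pmat \<Rightarrow> 'a::zero) \<Rightarrow> bool" where
  "in_ASM x \<longleftrightarrow> finite (supp x) \<and> supp x \<subseteq> Mof ` {\<delta>. is_asm \<delta>}"

definition qvar :: "'a::field poly fract" where
  "qvar = Fract [:0, 1:] 1"

definition const :: "'a::field \<Rightarrow> 'a poly fract" where
  "const c = Fract [:c:] 1"

definition phi :: "(sgnmat \<Rightarrow> nat) \<Rightarrow> (pmat \<Rightarrow> 'a::field) \<Rightarrow> 'a poly fract" where
  "phi s x = (\<Sum>\<delta>\<in>{\<delta>. is_asm \<delta> \<and> x (Mof \<delta>) \<noteq> 0}.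
                const (x (Mof \<delta>)) * qvar ^ s \<delta> / of_nat (fact (fst \<delta>)))"

end

theory Submission
  imports Defs
begin

lemma const_add: "const (a + b) = const a + const (b::'a::field)"
  by (simp add: const_def)
lemma const_mult: "const (a * b) = const a * const (b::'a::field)"
  by (simp add: const_def mult_ac)
lemma const_zero: "const (0::'a::field) = 0"
  by (simp add: const_def Zero_fract_def)
lemma const_one: "const (1::'a::field) = 1"
  by (simp add: const_def One_fract_def pCons_one)
lemma const_of_nat: "const (of_nat n :: 'a::field) = of_nat n"
  by (induction n) (simp_all add: const_zero const_add const_one)
lemma const_sum: "const (sum f A) = (\<Sum>x\<in>A. const (f x :: 'a::field))"
  by (induction A rule: infinite_finite_induct) (simp_all add: const_zero const_add)

lemma of_nat_fract_nz: "n \<noteq> 0 \<Longrightarrow> (of_nat n :: 'a::field_char_0 poly fract) \<noteq> 0"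
  by (simp add: of_nat_fract Zero_fract_def eq_fract)

lemma rank_bij:
  fixes S :: "nat set"
  assumes "finite S"
  shows "bij_betw (\<lambda>c. card {x\<in>S. x < c}) S {..<card S}"
proof -
  have inj: "inj_on (\<lambda>c. card {x\<in>S. x < c}) S"
  proof (rule inj_onI)
    have lt: "card {x\<in>S. x < c} < card {x\<in>S. x < d}" if "c \<in> S" "d \<in> S" "c < d" for c d :: nat
      by (rule psubset_card_mono) (use assms that in auto)
    fix c d assume "c \<in> S" "d \<in> S" "card {x\<in>S. x < c} = card {x\<in>S. x < d}"
    then show "c = d" using lt[of c d] lt[of d c] by (metis less_irrefl linorder_neqE_nat)
  qed
  have sub: "(\<lambda>c. card {x\<in>S. x < c}) ` S \<subseteq> {..<card S}"
  proof
    fix y assume "y \<in> (\<lambda>c. card {x\<in>S. x < c}) ` S"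
    then obtain c where c: "c \<in> S" "y = card {x\<in>S. x < c}" by auto
    have "card {x\<in>S. x < c} < card S" by (rule psubset_card_mono) (use assms c in auto)
    then show "y \<in> {..<card S}" using c by simp
  qed
  have "card ((\<lambda>c. card {x\<in>S. x < c}) ` S) = card {..<card S}"
    using card_image[OF inj] by simp
  then have "(\<lambda>c. card {x\<in>S. x < c}) ` S = {..<card S}"
    using sub by (simp add: card_subset_eq)
  then show ?thesis using inj by (simp add: bij_betw_def)
qed

lemma filter_shuffle:
  fixes f :: "nat \<Rightarrow> int"
  assumes "S \<subseteq> {..<N}"
  shows "filter (\<lambda>x. x \<noteq> 0) (map (\<lambda>c. if c \<in> S then f (card {x\<in>S. x < c}) else 0) [0..<N])
       = filter (\<lambda>x. x \<noteq> 0) (map f [0..<card S])"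
  using assms
proof (induction N arbitrary: S)
  case 0 then show ?case by simp
next
  case (Suc N)
  show ?case
  proof (cases "N \<in> S")
    case True
    define S' where "S' = S - {N}"
    have S': "S' \<subseteq> {..<N}" using Suc.prems by (auto simp: S'_def)
    have fin: "finite S'" using S' finite_subset by blast
    have eqm: "map (\<lambda>c. if c \<in> S then f (card {x\<in>S. x < c}) else 0) [0..<N]
        = map (\<lambda>c. if c \<in> S' then f (card {x\<in>S'. x < c}) else 0) [0..<N]"
    proof (rule map_cong[OF refl])
      fix c assume "c \<in> set [0..<N]"
      then have "c < N" by simp
      then have "{x\<in>S. x < c} = {x\<in>S'. x < c}" "(c \<in> S) = (c \<in> S')" by (auto simp: S'_def)
      then show "(if c \<in> S then f (card {x\<in>S. x < c}) else 0) = (if c \<in> S' then f (card {x\<in>S'. x < c}) else 0)"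
        by simp
    qed
    have rN: "{x\<in>S. x < N} = S'" using Suc.prems by (auto simp: S'_def)
    have finS: "finite S" using Suc.prems finite_subset by blast
    have cS: "card S = Suc (card S')" using True finS unfolding S'_def
      by (metis card_Suc_Diff1)
    show ?thesis using Suc.IH[OF S'] True by (simp add: eqm rN cS)
  next
    case False
    have S': "S \<subseteq> {..<N}" using Suc.prems False by (auto simp: less_Suc_eq)
    show ?thesis using Suc.IH[OF S'] False by simp
  qed
qed
lemma filter_nth_pos:
  fixes f :: "nat \<Rightarrow> int"
  assumes "j < n" "f j \<noteq> 0"
  shows "length (filter (\<lambda>x. x \<noteq> 0) (map f [0..<j])) < length (filter (\<lambda>x. x \<noteq> 0) (map f [0..<n]))
    \<and> filter (\<lambda>x. x \<noteq> 0) (map f [0..<n]) ! length (filter (\<lambda>x. x \<noteq> 0) (map f [0..<j])) = f j"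
proof -
  have a: "[0..<n] = [0..<j] @ [j..<n]" using upt_add_eq_append[of 0 j "n - j"] assms(1) by simp
  have b: "[j..<n] = j # [Suc j..<n]" using assms(1) by (rule upt_conv_Cons)
  have "[0..<n] = [0..<j] @ j # [Suc j..<n]" using a b by simp
  then show ?thesis using assms(2) by (simp add: nth_append)
qed

lemma asm_val:
  assumes "is_asm d" "i < fst d" "j < fst d" "snd d i j \<noteq> 0"
  shows "snd d i j = (-1) ^ length (filter (\<lambda>j'. snd d i j' \<noteq> 0) [0..<j])"
proof -
  have alt: "alternating_pm (row_nonzeros d i)" using assms(1,2) by (simp add: is_asm_def)
  have L: "length (filter (\<lambda>x. x \<noteq> 0) (map (snd d i) [0..<j])) = length (filter (\<lambda>j'. snd d i j' \<noteq> 0) [0..<j])"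
    by (simp add: filter_map o_def)
  have P: "length (filter (\<lambda>x. x \<noteq> 0) (map (snd d i) [0..<j])) < length (filter (\<lambda>x. x \<noteq> 0) (map (snd d i) [0..<fst d]))
    \<and> filter (\<lambda>x. x \<noteq> 0) (map (snd d i) [0..<fst d]) ! length (filter (\<lambda>x. x \<noteq> 0) (map (snd d i) [0..<j])) = snd d i j"
    by (rule filter_nth_pos[of j "fst d" "snd d i"]) (use assms in auto)
  from P alt show ?thesis
    unfolding row_nonzeros_def alternating_pm_def L[symmetric] by auto
qed

lemma Mof_inj: "inj_on Mof {d. is_asm d}"
proof (rule inj_onI)
  fix d e assume d: "d \<in> {d. is_asm d}" and e: "e \<in> {d. is_asm d}" and eq: "Mof d = Mof e"
  then have ad: "is_asm d" and ae: "is_asm e" by auto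
  have f: "fst d = fst e" using eq by (simp add: Mof_def)
  have nzf: "(\<lambda>i j. snd d i j \<noteq> 0) = (\<lambda>i j. snd e i j \<noteq> 0)"
    using arg_cong[OF eq, of snd] unfolding Mof_def by simp
  have nz: "\<And>i j. (snd d i j \<noteq> 0) = (snd e i j \<noteq> 0)"
    by (rule fun_cong[OF fun_cong[OF nzf]])
  have od: "\<And>i j. fst d \<le> i \<or> fst d \<le> j \<Longrightarrow> snd d i j = 0" using ad unfolding is_asm_def by blast
  have oe: "\<And>i j. fst e \<le> i \<or> fst e \<le> j \<Longrightarrow> snd e i j = 0" using ae unfolding is_asm_def by blast
  have "snd d i j = snd e i j" for i j
  proof (cases "i < fst d \<and> j < fst d")
    case True
    show ?thesis
    proof (cases "snd d i j = 0")
      case True then show ?thesis using nz[of i j] by simp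
    next
      case False
      have fe: "filter (\<lambda>j'. snd d i j' \<noteq> 0) [0..<j] = filter (\<lambda>j'. snd e i j' \<noteq> 0) [0..<j]"
        using nz by (intro filter_cong) auto
      have ne: "snd e i j \<noteq> 0" using False nz[of i j] by simp
      have "snd d i j = (-1) ^ length (filter (\<lambda>j'. snd d i j' \<noteq> 0) [0..<j])"
        using asm_val[OF ad, of i j] True False by simp
      moreover have "snd e i j = (-1) ^ length (filter (\<lambda>j'. snd e i j' \<noteq> 0) [0..<j])"
        using asm_val[OF ae, of i j] True ne f by simp
      ultimately show ?thesis using fe by simp
    qed
  next
    case False
    then show ?thesis using od[of i j] oe[of i j] f by auto
  qed
  then have "snd d = snd e" by (intro ext)
  then show "d = e" using f by (simp add: prod_eq_iff)
qed
definition sh :: "sgnmat \<Rightarrow> sgnmat \<Rightarrow> nat set \<Rightarrow> sgnmat" where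
  "sh d e S = (fst d + fst e, \<lambda>i c. if i < fst d + fst e \<and> c < fst d + fst e then
      (if c \<in> S then (if i < fst d then snd d i (card {x\<in>S. x < c}) else 0)
       else (if fst d \<le> i then snd e (i - fst d) (card {x\<in>{..<fst d + fst e} - S. x < c}) else 0)) else 0)"

lemma Mof_sh: "Mof (sh d e S) = shuffle_cols (Mof d) (Mof e) S"
  unfolding Mof_def sh_def shuffle_cols_def Let_def by (auto simp: fun_eq_iff)

lemma block_card:
  fixes v :: int and F G :: "nat \<Rightarrow> nat \<Rightarrow> int"
  assumes v: "v \<noteq> 0" and bij: "bij_betw r S' {..<m}" and S': "S' \<subseteq> {..<N}" and km: "k + m \<le> N"
    and G: "\<And>i c. i < N \<Longrightarrow> c \<in> S' \<Longrightarrow> G i c = (if k \<le> i \<and> i < k + m then F (i - k) (r c) else 0)"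
  shows "card {(i,c). i < N \<and> c < N \<and> c \<in> S' \<and> G i c = v} = card {(i,j). i < m \<and> j < m \<and> F i j = v}"
proof (rule bij_betw_same_card[of "\<lambda>(i,c). (i - k, r c)"])
  let ?P = "{(i,c). i < N \<and> c < N \<and> c \<in> S' \<and> G i c = v}"
  let ?Q = "{(i,j). i < m \<and> j < m \<and> F i j = v}"
  have inj: "inj_on r S'" using bij by (simp add: bij_betw_def)
  have img: "r ` S' = {..<m}" using bij by (simp add: bij_betw_def)
  have mem: "k \<le> i \<and> i < k + m \<and> F (i - k) (r c) = v" if "(i,c) \<in> ?P" for i c
  proof -
    from that have "i < N" "c \<in> S'" "G i c = v" by auto
    with G[of i c] v show ?thesis by (auto split: if_splits)
  qed
  show "bij_betw (\<lambda>(i,c). (i - k, r c)) ?P ?Q"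
  proof (rule bij_betw_imageI)
    show "inj_on (\<lambda>(i,c). (i - k, r c)) ?P"
    proof (rule inj_onI)
      fix x y assume xy: "x \<in> ?P" "y \<in> ?P" "(\<lambda>(i,c). (i - k, r c)) x = (\<lambda>(i,c). (i - k, r c)) y"
      obtain i c where x: "x = (i,c)" by fastforce
      obtain i' c' where y: "y = (i',c')" by fastforce
      have a: "(i,c) \<in> ?P" "(i',c') \<in> ?P" "i - k = i' - k" "r c = r c'" using xy x y by auto
      have "k \<le> i" "k \<le> i'" using mem[OF a(1)] mem[OF a(2)] by auto
      then have "i = i'" using a(3) by linarith
      moreover have "c = c'" using a(1,2,4) inj by (auto dest: inj_onD)
      ultimately show "x = y" using x y by simp
    qed
    show "(\<lambda>(i,c). (i - k, r c)) ` ?P = ?Q"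
    proof
      show "(\<lambda>(i,c). (i - k, r c)) ` ?P \<subseteq> ?Q"
      proof (rule subsetI)
        fix y assume "y \<in> (\<lambda>(i,c). (i - k, r c)) ` ?P"
        then obtain i c where a: "(i,c) \<in> ?P" and y: "y = (i - k, r c)" by auto
        have "r c \<in> {..<m}" using a img by auto
        then show "y \<in> ?Q" using mem[OF a] y by auto
      qed
      show "?Q \<subseteq> (\<lambda>(i,c). (i - k, r c)) ` ?P"
      proof (rule subsetI)
        fix y assume "y \<in> ?Q"
        then obtain a j where q: "a < m" "j < m" "F a j = v" and y: "y = (a, j)" by auto
        then obtain c where c: "c \<in> S'" "r c = j" using img by (metis imageE lessThan_iff)
        have "c < N" using c S' by auto
        have "G (a + k) c = v" using G[of "a + k" c] c q km by auto
        then have "(a + k, c) \<in> ?P" using c \<open>c < N\<close> q km by auto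
        moreover have "(a, j) = (\<lambda>(i,c). (i - k, r c)) (a + k, c)" using c by simp
        ultimately show "y \<in> (\<lambda>(i,c). (i - k, r c)) ` ?P" using y by blast
      qed
    qed
  qed
qed

definition cnt :: "int \<Rightarrow> sgnmat \<Rightarrow> nat" where
  "cnt v d = card {(i, j). i < fst d \<and> j < fst d \<and> snd d i j = v}"

lemma cnt_sh:
  assumes v: "v \<noteq> 0" and S: "S \<subseteq> {..<fst d + fst e}" "card S = fst d"
  shows "cnt v (sh d e S) = cnt v d + cnt v e"
proof -
  define N where "N = fst d + fst e"
  define T where "T = {..<N} - S"
  have finS: "finite S" using S finite_subset by blast
  have cT: "card T = fst e" unfolding T_def using S by (simp add: card_Diff_subset finS N_def)
  have TS: "T \<subseteq> {..<N}" by (auto simp: T_def)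
  let ?g = "snd (sh d e S)"
  have split: "{(i,c). i < N \<and> c < N \<and> ?g i c = v} =
      {(i,c). i < N \<and> c < N \<and> c \<in> S \<and> ?g i c = v} \<union> {(i,c). i < N \<and> c < N \<and> c \<in> T \<and> ?g i c = v}"
    by (auto simp: T_def)
  have fin1: "finite {(i,c). i < N \<and> c < N \<and> c \<in> S \<and> ?g i c = v}"
    by (rule finite_subset[of _ "{..<N} \<times> {..<N}"]) auto
  have fin2: "finite {(i,c). i < N \<and> c < N \<and> c \<in> T \<and> ?g i c = v}"
    by (rule finite_subset[of _ "{..<N} \<times> {..<N}"]) auto
  have disj: "{(i,c). i < N \<and> c < N \<and> c \<in> S \<and> ?g i c = v} \<inter> {(i,c). i < N \<and> c < N \<and> c \<in> T \<and> ?g i c = v} = {}"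
    by (auto simp: T_def)
  have c1: "card {(i,c). i < N \<and> c < N \<and> c \<in> S \<and> ?g i c = v} = cnt v d"
    unfolding cnt_def
  proof (rule block_card[where k = 0 and F = "snd d" and r = "\<lambda>c. card {x\<in>S. x < c}"])
    show "bij_betw (\<lambda>c. card {x\<in>S. x < c}) S {..<fst d}" using rank_bij[OF finS] S by simp
  qed (use v S in \<open>auto simp: N_def sh_def\<close>)
  have c2: "card {(i,c). i < N \<and> c < N \<and> c \<in> T \<and> ?g i c = v} = cnt v e"
    unfolding cnt_def
  proof (rule block_card[where k = "fst d" and F = "snd e" and r = "\<lambda>c. card {x\<in>T. x < c}"])
    show "bij_betw (\<lambda>c. card {x\<in>T. x < c}) T {..<fst e}" using rank_bij[of T] TS cT
      by (metis finite_lessThan finite_subset)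
  qed (use v TS in \<open>auto simp: N_def sh_def T_def\<close>)
  have "cnt v (sh d e S) = card {(i,c). i < N \<and> c < N \<and> ?g i c = v}"
    by (simp add: cnt_def sh_def N_def)
  also have "\<dots> = cnt v d + cnt v e"
    unfolding split using card_Un_disjoint[OF fin1 fin2 disj] c1 c2 by simp
  finally show ?thesis .
qed
lemma map_if_upt: "map (\<lambda>i. if i < n then f i else g i) [0..<n] = map f [0..<n]"
  by (rule map_cong) auto

lemma filter_zero_map:
  "(\<And>i. i \<in> set xs \<Longrightarrow> f i = (0::int)) \<Longrightarrow> filter (\<lambda>x. x \<noteq> 0) (map f xs) = []"
  by (induction xs) auto

lemma is_asm_sh:
  assumes ad: "is_asm d" and ae: "is_asm e" and S: "S \<subseteq> {..<fst d + fst e}" "card S = fst d"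
  shows "is_asm (sh d e S)"
proof -
  define n1 where "n1 = fst d"
  define n2 where "n2 = fst e"
  define N where "N = n1 + n2"
  define T where "T = {..<N} - S"
  have finS: "finite S" using S finite_subset by blast
  have cT: "card T = n2" unfolding T_def using S by (simp add: card_Diff_subset finS N_def n1_def n2_def)
  have TS: "T \<subseteq> {..<N}" by (auto simp: T_def)
  have memT: "c \<in> T \<longleftrightarrow> c < N \<and> c \<notin> S" for c by (auto simp: T_def)
  have finT: "finite T" using TS finite_subset by blast
  have g: "snd (sh d e S) i c = (if i < N \<and> c < N then
      (if c \<in> S then (if i < n1 then snd d i (card {x\<in>S. x < c}) else 0)
       else (if n1 \<le> i then snd e (i - n1) (card {x\<in>T. x < c}) else 0)) else 0)" for i c
    by (simp add: sh_def N_def n1_def n2_def T_def)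
  have fsh: "fst (sh d e S) = N" by (simp add: sh_def N_def n1_def n2_def)
  have d1: "\<forall>i j. snd d i j \<in> {-1, 0, 1}" "\<forall>i<n1. alternating_pm (row_nonzeros d i)"
     "\<forall>j<n1. alternating_pm (col_nonzeros d j)" using ad by (auto simp: is_asm_def n1_def)
  have e1: "\<forall>i j. snd e i j \<in> {-1, 0, 1}" "\<forall>i<n2. alternating_pm (row_nonzeros e i)"
     "\<forall>j<n2. alternating_pm (col_nonzeros e j)" using ae by (auto simp: is_asm_def n2_def)
  have rS: "card {x\<in>S. x < c} < n1" if "c \<in> S" for c
    using bij_betw_apply[OF rank_bij[OF finS] that] S(2) by (simp add: n1_def)
  have rT: "card {x\<in>T. x < c} < n2" if "c \<in> T" for c
    using bij_betw_apply[OF rank_bij[OF finT] that] cT by simp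
  have split: "[0..<N] = [0..<n1] @ [n1..<N]" using upt_add_eq_append[of 0 n1 n2] by (simp add: N_def)
  have shift: "[n1..<N] = map (\<lambda>i. i + n1) [0..<n2]" by (simp add: map_add_upt N_def add.commute)
  have P1: "\<forall>i j. snd (sh d e S) i j \<in> {-1, 0, 1}"
    using d1(1) e1(1) by (simp add: g)
  have P2: "\<forall>i j. (N \<le> i \<or> N \<le> j) \<longrightarrow> snd (sh d e S) i j = 0"
    by (auto simp: g)
  have P3: "alternating_pm (row_nonzeros (sh d e S) i)" if i: "i < N" for i
  proof (cases "i < n1")
    case True
    have "row_nonzeros (sh d e S) i = filter (\<lambda>x. x \<noteq> 0)
        (map (\<lambda>c. if c \<in> S then snd d i (card {x\<in>S. x < c}) else 0) [0..<N])"
      unfolding row_nonzeros_def fsh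
    proof (intro arg_cong[where f="filter _"] map_cong[OF refl])
      fix c assume "c \<in> set [0..<N]" then have cN: "c < N" by simp
      show "snd (sh d e S) i c = (if c \<in> S then snd d i (card {x\<in>S. x < c}) else 0)"
        using cN i True by (simp add: g)
    qed
    also have "\<dots> = row_nonzeros d i"
      using filter_shuffle[OF S(1)[folded n1_def n2_def, folded N_def]] S(2) by (simp add: row_nonzeros_def n1_def)
    finally show ?thesis using d1(2) True by simp
  next
    case False
    have "row_nonzeros (sh d e S) i = filter (\<lambda>x. x \<noteq> 0)
        (map (\<lambda>c. if c \<in> T then snd e (i - n1) (card {x\<in>T. x < c}) else 0) [0..<N])"
      unfolding row_nonzeros_def fsh
    proof (intro arg_cong[where f="filter _"] map_cong[OF refl])
      fix c assume "c \<in> set [0..<N]" then have cN: "c < N" by simp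
      show "snd (sh d e S) i c = (if c \<in> T then snd e (i - n1) (card {x\<in>T. x < c}) else 0)"
        using cN i False memT[of c] by (simp add: g)
    qed
    also have "\<dots> = row_nonzeros e (i - n1)"
      using filter_shuffle[OF TS] cT by (simp add: row_nonzeros_def n2_def)
    finally show ?thesis using e1(2) False i by (simp add: N_def)
  qed
  have P4: "alternating_pm (col_nonzeros (sh d e S) c)" if c: "c < N" for c
  proof (cases "c \<in> S")
    case True
    have "col_nonzeros (sh d e S) c = filter (\<lambda>x. x \<noteq> 0)
        (map (\<lambda>i. if i < n1 then snd d i (card {x\<in>S. x < c}) else 0) [0..<N])"
      unfolding col_nonzeros_def fsh
    proof (intro arg_cong[where f="filter _"] map_cong[OF refl])
      fix i assume "i \<in> set [0..<N]" then have iN: "i < N" by simp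
      show "snd (sh d e S) i c = (if i < n1 then snd d i (card {x\<in>S. x < c}) else 0)"
        using iN c True by (simp add: g)
    qed
    also have "\<dots> = col_nonzeros d (card {x\<in>S. x < c})"
      unfolding split col_nonzeros_def n1_def[symmetric]
      by (simp add: filter_zero_map map_if_upt)
    finally show ?thesis using d1(3) rS[OF True] by simp
  next
    case False
    then have cT': "c \<in> T" using c by (simp add: T_def)
    have "col_nonzeros (sh d e S) c = filter (\<lambda>x. x \<noteq> 0)
        (map (\<lambda>i. if n1 \<le> i then snd e (i - n1) (card {x\<in>T. x < c}) else 0) [0..<N])"
      unfolding col_nonzeros_def fsh
    proof (intro arg_cong[where f="filter _"] map_cong[OF refl])
      fix i assume "i \<in> set [0..<N]" then have iN: "i < N" by simp
      show "snd (sh d e S) i c = (if n1 \<le> i then snd e (i - n1) (card {x\<in>T. x < c}) else 0)"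
        using iN c False by (simp add: g)
    qed
    also have "\<dots> = col_nonzeros e (card {x\<in>T. x < c})"
      unfolding split col_nonzeros_def n2_def[symmetric] shift
      by (simp add: filter_zero_map o_def)
    finally show ?thesis using e1(3) rT[OF cT'] by simp
  qed
  show ?thesis unfolding is_asm_def fsh using P1 P2 P3 P4 by blast
qed
definition wt :: "(sgnmat \<Rightarrow> nat) \<Rightarrow> sgnmat \<Rightarrow> 'a::field poly fract" where
  "wt s d = qvar ^ s d / of_nat (fact (fst d))"

definition Wt :: "(sgnmat \<Rightarrow> nat) \<Rightarrow> pmat \<Rightarrow> 'a::field poly fract" where
  "Wt s M = wt s (inv_into {d. is_asm d} Mof M)"

lemma Wt_Mof: "is_asm d \<Longrightarrow> Wt s (Mof d) = wt s d"
  unfolding Wt_def by (subst inv_into_f_f[OF Mof_inj]) auto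

lemma phi_eq:
  fixes x :: "pmat \<Rightarrow> 'a::field"
  assumes T: "finite T" "T \<subseteq> Mof ` {d. is_asm d}" "supp x \<subseteq> T"
  shows "phi s x = (\<Sum>M\<in>T. const (x M) * Wt s M)"
proof -
  define D where "D = {d. is_asm d \<and> x (Mof d) \<noteq> 0}"
  have img: "Mof ` D = supp x"
  proof
    show "Mof ` D \<subseteq> supp x" by (auto simp: D_def supp_def)
    show "supp x \<subseteq> Mof ` D"
    proof
      fix M assume M: "M \<in> supp x"
      then obtain d where "is_asm d" "M = Mof d" using T by blast
      then show "M \<in> Mof ` D" using M by (auto simp: D_def supp_def)
    qed
  qed
  have inj: "inj_on Mof D" by (rule inj_on_subset[OF Mof_inj]) (auto simp: D_def)
  have "phi s x = (\<Sum>d\<in>D. const (x (Mof d)) * Wt s (Mof d))"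
    unfolding phi_def D_def[symmetric]
    by (rule sum.cong) (auto simp: D_def Wt_Mof wt_def)
  also have "\<dots> = (\<Sum>M\<in>supp x. const (x M) * Wt s M)"
    using sum.reindex[OF inj, of "\<lambda>M. const (x M) * Wt s M"] img by simp
  also have "\<dots> = (\<Sum>M\<in>T. const (x M) * Wt s M)"
    by (rule sum.mono_neutral_left) (use T in \<open>auto simp: supp_def const_zero\<close>)
  finally show ?thesis .
qed

lemma count_sum:
  fixes g :: "'b \<Rightarrow> 'c::comm_semiring_1"
  assumes "finite T" "set_mset X \<subseteq> T"
  shows "(\<Sum>M\<in>T. of_nat (count X M) * g M) = sum_mset (image_mset g X)"
  using assms(2)
proof (induction X)
  case empty then show ?case by simp
next
  case (add a X)
  have aT: "a \<in> T" using add.prems by simp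
  have "(\<Sum>M\<in>T. of_nat (count (add_mset a X) M) * g M)
      = (\<Sum>M\<in>T. of_nat (count X M) * g M) + (\<Sum>M\<in>T. (if M = a then g M else 0))"
    unfolding sum.distrib[symmetric] by (rule sum.cong) (auto simp: distrib_right algebra_simps)
  also have "(\<Sum>M\<in>T. (if M = a then g M else 0)) = g a"
    using aT assms(1) by (simp add: sum.delta)
  finally have calc: "(\<Sum>M\<in>T. of_nat (count (add_mset a X) M) * g M)
      = (\<Sum>M\<in>T. of_nat (count X M) * g M) + g a" .
  have IH: "(\<Sum>M\<in>T. of_nat (count X M) * g M) = sum_mset (image_mset g X)" using add by simp
  show ?case unfolding calc IH by (simp add: add.commute)
qed

lemma s_sh:
  assumes "s = io \<or> s = oi" "S \<subseteq> {..<fst d + fst e}" "card S = fst d"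
  shows "s (sh d e S) = s d + s e"
proof -
  have io: "io = cnt (-1)" and oi: "oi = cnt 1" by (auto simp: fun_eq_iff io_def oi_def cnt_def)
  show ?thesis using assms cnt_sh[of "-1" S d e] cnt_sh[of 1 S d e] by (auto simp: io oi)
qed

lemma fact_nz: "(of_nat (fact n) :: 'a::field_char_0 poly fract) \<noteq> 0"
  by (rule of_nat_fract_nz) simp

lemma fact_binom_field:
  assumes "k \<le> n"
  shows "of_nat (fact k) * of_nat (fact (n - k)) * of_nat (n choose k) = (of_nat (fact n) :: 'b::semiring_1)"
proof -
  have "fact k * fact (n - k) * (n choose k) = (fact n :: nat)" using binomial_fact_lemma[OF assms] by simp
  then show ?thesis by (metis of_nat_mult)
qed

lemma choose_nz: "k \<le> n \<Longrightarrow> (of_nat (n choose k) :: 'a::field_char_0 poly fract) \<noteq> 0"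
  by (rule of_nat_fract_nz) simp

lemma wt_prod: "of_nat (m + n choose m) * (qvar ^ (a + b) / of_nat (fact (m + n)))
   = qvar ^ a / of_nat (fact m) * (qvar ^ b / (of_nat (fact n) :: 'a::field_char_0 poly fract))"
proof -
  have h1: "(of_nat (fact m) :: 'a poly fract) \<noteq> 0" by (rule fact_nz)
  have h2: "(of_nat (fact n) :: 'a poly fract) \<noteq> 0" by (rule fact_nz)
  have h3: "(of_nat (m + n choose m) :: 'a poly fract) \<noteq> 0" by (rule choose_nz) simp
  have h4: "(of_nat (fact (m + n)) :: 'a poly fract) = of_nat (fact m) * of_nat (fact n) * of_nat (m + n choose m)"
    by (subst fact_binom_field[of m "m + n", symmetric]) simp_all
  show ?thesis unfolding h4 using h1 h2 h3 by (simp add: field_simps power_add)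
qed

lemma key:
  assumes s: "s = io \<or> s = oi" and d: "is_asm d" and e: "is_asm e"
  shows "set_mset (pm_prod (Mof d) (Mof e)) \<subseteq> Mof ` {d. is_asm d}"
    and "finite T' \<Longrightarrow> set_mset (pm_prod (Mof d) (Mof e)) \<subseteq> T' \<Longrightarrow>
      (\<Sum>M\<in>T'. of_nat (count (pm_prod (Mof d) (Mof e)) M) * Wt s M)
        = Wt s (Mof d) * (Wt s (Mof e) :: 'a::field_char_0 poly fract)"
proof -
  define \<S> where "\<S> = {S. S \<subseteq> {..<fst d + fst e} \<and> card S = fst d}"
  have finS: "finite \<S>" unfolding \<S>_def by (rule finite_subset[of _ "Pow {..<fst d + fst e}"]) auto
  have fM: "fst (Mof d) = fst d" "fst (Mof e) = fst e" by (auto simp: Mof_def)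
  have pp: "pm_prod (Mof d) (Mof e) = image_mset (shuffle_cols (Mof d) (Mof e)) (mset_set \<S>)"
    unfolding pm_prod_def \<S>_def fM ..
  have shS: "shuffle_cols (Mof d) (Mof e) S = Mof (sh d e S) \<and> is_asm (sh d e S)" if "S \<in> \<S>" for S
    using that is_asm_sh[OF d e] by (auto simp: \<S>_def Mof_sh)
  show sub: "set_mset (pm_prod (Mof d) (Mof e)) \<subseteq> Mof ` {d. is_asm d}"
    unfolding pp using finS shS by auto
  assume T': "finite T'" "set_mset (pm_prod (Mof d) (Mof e)) \<subseteq> T'"
  have "(\<Sum>M\<in>T'. of_nat (count (pm_prod (Mof d) (Mof e)) M) * (Wt s M :: 'a poly fract))
      = sum_mset (image_mset (Wt s) (pm_prod (Mof d) (Mof e)))"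
    by (rule count_sum[OF T'])
  also have "\<dots> = (\<Sum>S\<in>\<S>. Wt s (shuffle_cols (Mof d) (Mof e) S))"
    unfolding pp image_mset.compositionality sum_unfold_sum_mset[of "\<lambda>S. Wt s (shuffle_cols (Mof d) (Mof e) S)"]
    by (simp add: o_def)
  also have "\<dots> = (\<Sum>S\<in>\<S>. qvar ^ (s d + s e) / of_nat (fact (fst d + fst e)))"
  proof (rule sum.cong[OF refl])
    fix S assume S: "S \<in> \<S>"
    have f: "fst (sh d e S) = fst d + fst e" by (simp add: sh_def)
    have ss: "s (sh d e S) = s d + s e" using S s s_sh by (auto simp: \<S>_def)
    show "Wt s (shuffle_cols (Mof d) (Mof e) S) = qvar ^ (s d + s e) / of_nat (fact (fst d + fst e))"
      using shS[OF S] by (simp add: Wt_Mof wt_def f ss)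
  qed
  also have "\<dots> = of_nat (fst d + fst e choose fst d) * (qvar ^ (s d + s e) / of_nat (fact (fst d + fst e)))"
    by (simp add: \<S>_def n_subsets)
  also have "\<dots> = Wt s (Mof d) * Wt s (Mof e)"
  proof -
    have "fact (fst d) * fact (fst e) * (fst d + fst e choose fst d) = (fact (fst d + fst e) :: nat)"
      using binomial_fact_lemma[of "fst d" "fst d + fst e"] by simp
    then have B: "of_nat (fact (fst d)) * of_nat (fact (fst e)) * of_nat (fst d + fst e choose fst d)
        = (of_nat (fact (fst d + fst e)) :: 'a poly fract)"
      by (metis of_nat_mult)
    have C: "(of_nat (fst d + fst e choose fst d) :: 'a poly fract) \<noteq> 0"
      using B fact_nz[of "fst d + fst e"] by auto
    show ?thesis
      unfolding Wt_Mof[OF d] Wt_Mof[OF e] wt_def by (rule wt_prod)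
  qed
  finally show "(\<Sum>M\<in>T'. of_nat (count (pm_prod (Mof d) (Mof e)) M) * Wt s M)
        = Wt s (Mof d) * (Wt s (Mof e) :: 'a::field_char_0 poly fract)" .
qed
lemma in_ASM_D: "in_ASM x \<Longrightarrow> finite (supp x) \<and> supp x \<subseteq> Mof ` {d. is_asm d}"
  by (simp add: in_ASM_def)

theorem proposition4p3:
  fixes s :: "sgnmat \<Rightarrow> nat"
  assumes "s = io \<or> s = oi"
  shows "(\<forall>(x :: pmat \<Rightarrow> 'a::field_char_0) y a b. in_ASM x \<longrightarrow> in_ASM y \<longrightarrow>
             phi s (\<lambda>M. a * x M + b * y M) = const a * phi s x + const b * phi s y)
       \<and> (\<forall>(x :: pmat \<Rightarrow> 'a) y. in_ASM x \<longrightarrow> in_ASM y \<longrightarrow>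
             phi s (pm_mult x y) = phi s x * phi s y)
       \<and> phi s (pm_one :: pmat \<Rightarrow> 'a) = 1"
proof (intro conjI allI impI)
  fix x y :: "pmat \<Rightarrow> 'a" and a b :: 'a
  assume x: "in_ASM x" and y: "in_ASM y"
  let ?T = "supp x \<union> supp y"
  have T: "finite ?T" "?T \<subseteq> Mof ` {d. is_asm d}" using in_ASM_D[OF x] in_ASM_D[OF y] by auto
  have sz: "supp (\<lambda>M. a * x M + b * y M) \<subseteq> ?T" by (auto simp: supp_def)
  show "phi s (\<lambda>M. a * x M + b * y M) = const a * phi s x + const b * phi s y"
  proof -
    have px: "phi s x = (\<Sum>M\<in>?T. const (x M) * Wt s M)" by (rule phi_eq[OF T]) auto
    have py: "phi s y = (\<Sum>M\<in>?T. const (y M) * Wt s M)" by (rule phi_eq[OF T]) auto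
    show ?thesis unfolding phi_eq[OF T sz] px py
    by (simp add: const_add const_mult sum.distrib sum_distrib_left algebra_simps)
  qed
next
  fix x y :: "pmat \<Rightarrow> 'a"
  assume x: "in_ASM x" and y: "in_ASM y"
  define X where "X = supp x"
  define Y where "Y = supp y"
  have fX: "finite X" "X \<subseteq> Mof ` {d. is_asm d}" using in_ASM_D[OF x] by (auto simp: X_def)
  have fY: "finite Y" "Y \<subseteq> Mof ` {d. is_asm d}" using in_ASM_D[OF y] by (auto simp: Y_def)
  define T where "T = (\<Union>A\<in>X. \<Union>B\<in>Y. set_mset (pm_prod A B))"
  have fT: "finite T" unfolding T_def using fX fY by auto
  have subT: "set_mset (pm_prod A B) \<subseteq> T" if "A \<in> X" "B \<in> Y" for A B
    using that by (auto simp: T_def)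
  have TA: "T \<subseteq> Mof ` {d. is_asm d}"
  proof -
    have "set_mset (pm_prod A B) \<subseteq> Mof ` {d. is_asm d}" if AB: "A \<in> X" "B \<in> Y" for A B
    proof -
      obtain d e where "is_asm d" "A = Mof d" "is_asm e" "B = Mof e" using AB fX fY by blast
      then show ?thesis using key(1)[OF assms] by blast
    qed
    then show ?thesis unfolding T_def by blast
  qed
  have pmx: "pm_mult x y M = (\<Sum>A\<in>X. \<Sum>B\<in>Y. x A * y B * of_nat (count (pm_prod A B) M))" for M
    by (simp add: pm_mult_def X_def Y_def)
  have sT: "supp (pm_mult x y) \<subseteq> T"
  proof
    fix M assume M: "M \<in> supp (pm_mult x y)"
    show "M \<in> T"
    proof (rule ccontr)
      assume "M \<notin> T"
      then have "count (pm_prod A B) M = 0" if "A \<in> X" "B \<in> Y" for A B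
        using that by (auto simp: T_def count_eq_zero_iff)
      then have "pm_mult x y M = 0" unfolding pmx by simp
      then show False using M by (simp add: supp_def)
    qed
  qed
  have KW: "(\<Sum>M\<in>T. of_nat (count (pm_prod A B) M) * Wt s M) = Wt s A * (Wt s B :: 'a poly fract)"
    if AB: "A \<in> X" "B \<in> Y" for A B
  proof -
    obtain d e where "is_asm d" "A = Mof d" "is_asm e" "B = Mof e" using AB fX fY by blast
    then show ?thesis using key(2)[OF assms, of d e T] fT subT[OF AB] by simp
  qed
  have "phi s (pm_mult x y) = (\<Sum>M\<in>T. const (pm_mult x y M) * Wt s M)"
    by (rule phi_eq[OF fT TA sT])
  also have "\<dots> = (\<Sum>M\<in>T. \<Sum>A\<in>X. \<Sum>B\<in>Y. const (x A) * const (y B) * (of_nat (count (pm_prod A B) M) * Wt s M))"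
    unfolding pmx by (simp add: const_sum const_mult const_of_nat sum_distrib_right mult.assoc)
  also have "\<dots> = (\<Sum>A\<in>X. \<Sum>B\<in>Y. \<Sum>M\<in>T. const (x A) * const (y B) * (of_nat (count (pm_prod A B) M) * Wt s M))"
    by (simp add: sum.swap[of _ T] )
  also have "\<dots> = (\<Sum>A\<in>X. \<Sum>B\<in>Y. const (x A) * const (y B) * (Wt s A * Wt s B))"
    by (intro sum.cong refl) (simp add: sum_distrib_left[symmetric] KW)
  also have "\<dots> = (\<Sum>A\<in>X. const (x A) * Wt s A) * (\<Sum>B\<in>Y. const (y B) * Wt s B)"
    by (simp add: sum_product mult_ac)
  also have "\<dots> = phi s x * phi s y"
    using phi_eq[OF fX(1) fX(2), of x s] phi_eq[OF fY(1) fY(2), of y s] by (simp add: X_def Y_def)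
  finally show "phi s (pm_mult x y) = phi s x * phi s y" .
next
  define d0 :: sgnmat where "d0 = (0, \<lambda>i j. 0)"
  have a0: "is_asm d0" by (simp add: d0_def is_asm_def)
  have M0: "Mof d0 = (0, \<lambda>i j. False)" by (simp add: d0_def Mof_def)
  have s0: "s d0 = 0" using assms by (auto simp: d0_def io_def oi_def)
  have T: "finite {Mof d0}" "{Mof d0} \<subseteq> Mof ` {d. is_asm d}" using a0 by auto
  have sp: "supp (pm_one :: pmat \<Rightarrow> 'a) \<subseteq> {Mof d0}" by (auto simp: supp_def pm_one_def M0)
  show "phi s (pm_one :: pmat \<Rightarrow> 'a) = 1"
  proof -
    have "Wt s (Mof d0) = (1 :: 'a poly fract)" using a0 unfolding Wt_Mof[OF a0] wt_def s0 by (simp add: d0_def)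
    then show ?thesis unfolding phi_eq[OF T sp] by (simp add: M0 pm_one_def const_one)
  qed
qed

end
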